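(* Let $f\in C^0_b(\mathbb{R})$. There exists a positive constant $K=K(\|f\|_{L^\infty},d)$ such that every classical solution $(u,m)$ of the MFG system satisfies $\|u\|_{L^\infty}\le \|f\|_{L^\infty}/\lambda$, $\|Du\|_{L^\infty}\le K$, and $\|\Delta u\|_{L^\infty}\le 2\|f\|_{L^\infty}+K^2/2=:M$. Furthermore, if $\lambda>M$, then $\|m\|_{L^\infty}\le \frac{\lambda}{\lambda-M}\|m_0\|_{L^\infty}$.
   Context: $\mathbb{T}^d$ is the flat torus, $\lambda>0$, $\alpha\in(0,1)$, $m_0\in C^{0,\alpha}(\mathbb{T}^d)$ a probability density. $C^0_b(\mathbb{R})$ denotes bounded continuous functions. The MFG system is $-\Delta u + \tfrac12|Du|^2 + \lambda u = f(m)$, $-\Delta m - \operatorname{div}(m Du) + \lambda m = \lambda m_0$ in $\mathbb{T}^d$; a classical solution is a pair of $C^2$ functions satisfying it pointwise. *)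

theory Defs
  imports "HOL-Analysis.Analysis"
begin

text \<open>Functions on the flat torus T^d = R^d / Z^d are represented as Z^d-periodic
  functions on real^'d.\<close>

definition periodic :: "(real^'d \<Rightarrow> real) \<Rightarrow> bool" where
  "periodic u \<longleftrightarrow> (\<forall>x i. u (x + axis i 1) = u x)"

definition pd :: "'d \<Rightarrow> (real^'d \<Rightarrow> real) \<Rightarrow> real^'d \<Rightarrow> real" where
  "pd i u x = deriv (\<lambda>t. u (x + t *\<^sub>R axis i 1)) 0"

definition grad :: "(real^'d \<Rightarrow> real) \<Rightarrow> real^'d \<Rightarrow> real^'d" where
  "grad u x = (\<chi> i. pd i u x)"

definition laplacian :: "(real^'d \<Rightarrow> real) \<Rightarrow> real^'d \<Rightarrow> real" where
  "laplacian u x = (\<Sum>i\<in>UNIV. pd i (pd i u) x)"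

definition div_mgrad :: "(real^'d \<Rightarrow> real) \<Rightarrow> (real^'d \<Rightarrow> real) \<Rightarrow> real^'d \<Rightarrow> real" where
  "div_mgrad m u x = (\<Sum>i\<in>UNIV. pd i (\<lambda>y. m y * pd i u y) x)"

definition C2 :: "(real^'d \<Rightarrow> real) \<Rightarrow> bool" where
  "C2 u \<longleftrightarrow> (\<forall>x. u differentiable (at x)) \<and>
     (\<forall>i x. pd i u differentiable (at x)) \<and>
     (\<forall>i j. continuous_on UNIV (pd j (pd i u)))"

definition supnorm :: "('a \<Rightarrow> real) \<Rightarrow> real" where
  "supnorm u = (SUP x. \<bar>u x\<bar>)"

definition supnorm_vec :: "('a \<Rightarrow> real^'d) \<Rightarrow> real" where
  "supnorm_vec v = (SUP x. norm (v x))"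

definition holder :: "real \<Rightarrow> (real^'d \<Rightarrow> real) \<Rightarrow> bool" where
  "holder \<alpha> g \<longleftrightarrow> (\<exists>C. \<forall>x y. \<bar>g x - g y\<bar> \<le> C * dist x y powr \<alpha>)"

definition prob_density :: "(real^'d \<Rightarrow> real) \<Rightarrow> bool" where
  "prob_density g \<longleftrightarrow> (\<forall>x. g x \<ge> 0) \<and> (g has_integral 1) (cbox 0 One)"

definition MFG_classical_solution ::
  "real \<Rightarrow> (real \<Rightarrow> real) \<Rightarrow> (real^'d \<Rightarrow> real) \<Rightarrow> (real^'d \<Rightarrow> real) \<Rightarrow> (real^'d \<Rightarrow> real) \<Rightarrow> bool" where
  "MFG_classical_solution lam f m0 u m \<longleftrightarrow>
     periodic u \<and> periodic m \<and> C2 u \<and> C2 m \<and>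
     (\<forall>x. - laplacian u x + (1/2) * (norm (grad u x))\<^sup>2 + lam * u x = f (m x)) \<and>
     (\<forall>x. - laplacian m x - div_mgrad m u x + lam * m x = lam * m0 x)"

end

theory Submission
  imports Defs
begin


lemma dir_deriv:
  fixes u :: "real^'d \<Rightarrow> real"
  assumes du: "\<forall>y. u differentiable (at y)"
  shows "((\<lambda>s. u (x + s *\<^sub>R a)) has_real_derivative (\<Sum>i\<in>UNIV. a$i * pd i u (x + s *\<^sub>R a))) (at s)"
proof -
  have gen: "((\<lambda>t. u (y + t *\<^sub>R b)) has_real_derivative frechet_derivative u (at (y + t0 *\<^sub>R b)) b) (at t0)"
    for y b t0
  proof -
    let ?D = "frechet_derivative u (at (y + t0 *\<^sub>R b))"
    have D: "(u has_derivative ?D) (at (y + t0 *\<^sub>R b))"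
      using du frechet_derivative_works by blast
    have lin: "linear ?D" using D has_derivative_linear by blast
    have l: "((\<lambda>t. y + t *\<^sub>R b) has_derivative (\<lambda>h. h *\<^sub>R b)) (at t0)"
      by (auto intro!: derivative_eq_intros)
    have "((\<lambda>t. u (y + t *\<^sub>R b)) has_derivative (\<lambda>h. ?D (h *\<^sub>R b))) (at t0)"
      using has_derivative_compose[OF l D] by (simp add: o_def)
    moreover have "(\<lambda>h. ?D (h *\<^sub>R b)) = (\<lambda>h. h * ?D b)"
      using lin by (simp add: linear_scale)
    moreover have "(\<lambda>h. h * ?D b) = (*) (?D b)" by (auto simp: fun_eq_iff)
    ultimately show ?thesis
      unfolding has_field_derivative_def by metis
  qed
  let ?y = "x + s *\<^sub>R a"
  let ?D = "frechet_derivative u (at ?y)"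
  have lin: "linear ?D" using du frechet_derivative_works has_derivative_linear by blast
  have pdi: "pd i u ?y = ?D (axis i 1)" for i
  proof -
    have "((\<lambda>t. u (?y + t *\<^sub>R axis i 1)) has_real_derivative ?D (axis i 1)) (at 0)"
      using gen[of ?y "axis i 1" 0] by simp
    then show ?thesis unfolding pd_def by (rule DERIV_imp_deriv)
  qed
  have "a = (\<Sum>i\<in>UNIV. a$i *\<^sub>R axis i 1)"
    using basis_expansion[of a] by (simp add: scalar_mult_eq_scaleR)
  then have "?D a = (\<Sum>i\<in>UNIV. a$i * ?D (axis i 1))"
  proof -
    have "?D a = (\<Sum>i\<in>UNIV. ?D (a$i *\<^sub>R axis i 1))"
      by (subst \<open>a = _\<close>) (rule linear_sum[OF lin])
    also have "\<dots> = (\<Sum>i\<in>UNIV. a$i * ?D (axis i 1))"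
      by (rule sum.cong) (auto simp: linear_scale[OF lin])
    finally show ?thesis .
  qed
  then show ?thesis using gen[of x a s] pdi by (metis (no_types, lifting) sum.cong)
qed

definition Hq :: "(real^'d \<Rightarrow> real) \<Rightarrow> real^'d \<Rightarrow> real^'d \<Rightarrow> real" where
  "Hq u x a = (\<Sum>i\<in>UNIV. a$i * (\<Sum>j\<in>UNIV. a$j * pd j (pd i u) x))"

lemma axis_sum: "(\<Sum>i\<in>UNIV. axis k (1::real) $ i * g i) = g k"
proof -
  have "\<And>i. axis k (1::real) $ i * g i = (if k = i then g i else 0)" by (simp add: axis_def)
  then show ?thesis by simp
qed

lemma pd_deriv:
  fixes u :: "real^'d \<Rightarrow> real"
  assumes du: "\<forall>y. u differentiable (at y)"
  shows "((\<lambda>s. u (x + s *\<^sub>R axis k 1)) has_real_derivative pd k u (x + s *\<^sub>R axis k 1)) (at s)"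
  using dir_deriv[OF du, of x "axis k 1" s] by (simp add: axis_sum)

lemma line_second:
  fixes u :: "real^'d \<Rightarrow> real"
  assumes "C2 u"
  shows "((\<lambda>s. \<Sum>i\<in>UNIV. a$i * pd i u (x + s *\<^sub>R a)) has_real_derivative Hq u x a) (at 0)"
proof -
  have dd: "\<forall>y. pd i u differentiable (at y)" for i using assms unfolding C2_def by blast
  have "((\<lambda>s. pd i u (x + s *\<^sub>R a)) has_real_derivative (\<Sum>j\<in>UNIV. a$j * pd j (pd i u) x)) (at 0)" for i
    using dir_deriv[OF dd, where x=x and a=a and s=0] by simp
  then show ?thesis unfolding Hq_def
    by (auto intro!: DERIV_sum DERIV_cmult)
qed

lemma Hq_axis: "Hq u x (axis k 1) = pd k (pd k u) x"
  by (simp add: Hq_def axis_sum)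

lemma second_test:
  fixes h :: "real \<Rightarrow> real"
  assumes d1: "\<And>s. (h has_real_derivative h' s) (at s)"
    and d2: "(h' has_real_derivative c) (at 0)"
    and dpos: "\<delta> > 0" and mx: "\<And>s. \<bar>s\<bar> < \<delta> \<Longrightarrow> h s \<le> h 0"
  shows "h' 0 = 0 \<and> c \<le> 0"
proof -
  have h0: "h' 0 = 0"
    using DERIV_local_max[OF d1[of 0] dpos] mx by auto
  moreover have "c \<le> 0"
  proof (rule ccontr)
    assume "\<not> c \<le> 0"
    then obtain e where e: "e > 0" "\<And>t. t > 0 \<Longrightarrow> t < e \<Longrightarrow> h' 0 < h' (0 + t)"
      using DERIV_pos_inc_right[OF d2] by force
    define t where "t = min (e/2) (\<delta>/2)"
    have t: "t > 0" "t < e" "t < \<delta>" using e dpos by (auto simp: t_def)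
    obtain z where z: "0 < z" "z < t" "h t - h 0 = (t - 0) * h' z"
      using MVT2[OF t(1), of h h'] d1 by blast
    have "h' z > 0" using e(2)[of z] z t h0 by simp
    then have p: "t * h' z > 0" using t(1) by simp
    have "h 0 < h t" using z(3) p by simp
    moreover have "h t \<le> h 0" using mx[of t] t by simp
    ultimately show False by simp
  qed
  ultimately show ?thesis by simp
qed



lemma per_int:
  assumes "periodic u"
  shows "u (x + of_int n *\<^sub>R axis i 1) = u x"
proof (induction n rule: int_induct[where k=0])
  case base then show ?case by simp
next
  case (step1 k)
  have "u (x + of_int (k+1) *\<^sub>R axis i 1) = u ((x + of_int k *\<^sub>R axis i 1) + axis i 1)"
    by (simp add: algebra_simps)
  also have "\<dots> = u (x + of_int k *\<^sub>R axis i 1)" using assms unfolding periodic_def by blast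
  finally show ?case using step1 by simp
next
  case (step2 k)
  have "u (x + of_int k *\<^sub>R axis i 1) = u ((x + of_int (k-1) *\<^sub>R axis i 1) + axis i 1)"
    by (simp add: algebra_simps)
  also have "\<dots> = u (x + of_int (k-1) *\<^sub>R axis i 1)" using assms unfolding periodic_def by blast
  finally show ?case using step2 by simp
qed

lemma per_vec:
  fixes u :: "real^'d \<Rightarrow> real"
  assumes "periodic u" and vi: "\<forall>i. v$i \<in> \<int>"
  shows "u (x + v) = u x"
proof -
  have "u (x + (\<Sum>i\<in>I. v$i *\<^sub>R axis i 1)) = u x" if "finite I" for I
    using that
  proof (induction I arbitrary: x rule: finite_induct)
    case empty then show ?case by simp
  next
    case (insert j I)
    obtain n where n: "v$j = of_int n" using vi by (meson Ints_cases)
    have "u (x + (\<Sum>i\<in>insert j I. v$i *\<^sub>R axis i 1)) = u ((x + (\<Sum>i\<in>I. v$i *\<^sub>R axis i 1)) + of_int n *\<^sub>R axis j 1)"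
      using insert n by (simp add: algebra_simps)
    also have "\<dots> = u (x + (\<Sum>i\<in>I. v$i *\<^sub>R axis i 1))" by (rule per_int[OF assms(1)])
    finally show ?case using insert by simp
  qed
  moreover have "(\<Sum>i\<in>UNIV. v$i *\<^sub>R axis i 1) = v"
    using basis_expansion[of v] by (simp add: scalar_mult_eq_scaleR)
  ultimately show ?thesis by (metis finite)
qed

definition frac_vec :: "real^'d \<Rightarrow> real^'d" where
  "frac_vec x = (\<chi> i. x$i - of_int (floor (x$i)))"

lemma frac_vec_box: "frac_vec x \<in> cbox 0 (\<chi> i. 1)"
  unfolding mem_box_cart frac_vec_def by (auto simp: of_int_floor_le) linarith

lemma frac_vec_per: "periodic u \<Longrightarrow> u (frac_vec x) = u x"
proof -
  assume p: "periodic u"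
  have "u (frac_vec x + (\<chi> i. of_int (floor (x$i)))) = u (frac_vec x)"
    by (rule per_vec[OF p]) auto
  moreover have "frac_vec x + (\<chi> i. of_int (floor (x$i))) = x"
    by (simp add: frac_vec_def vec_eq_iff)
  ultimately show ?thesis by simp
qed

lemma per_max:
  fixes g :: "real^'d \<Rightarrow> real"
  assumes "periodic g" "continuous_on UNIV g"
  shows "\<exists>x0. \<forall>x. g x \<le> g x0"
proof -
  have "compact (cbox (0::real^'d) (\<chi> i. 1))" by simp
  moreover have "cbox (0::real^'d) (\<chi> i. 1) \<noteq> {}" using frac_vec_box by blast
  ultimately obtain x0 where "x0 \<in> cbox 0 (\<chi> i. 1)" "\<forall>y\<in>cbox 0 (\<chi> i. 1). g y \<le> g x0"
    using continuous_attains_sup[of "cbox 0 (\<chi> i. 1)" g] assms(2) continuous_on_subset by blast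
  then show ?thesis using frac_vec_box frac_vec_per[OF assms(1)] by metis
qed

lemma periodic_uminus: "periodic g \<Longrightarrow> periodic (\<lambda>x. - g x)"
  unfolding periodic_def by simp

lemma per_min:
  fixes g :: "real^'d \<Rightarrow> real"
  assumes "periodic g" "continuous_on UNIV g"
  shows "\<exists>x0. \<forall>x. g x0 \<le> g x"
  using per_max[OF periodic_uminus[OF assms(1)]] assms(2)
  by (auto intro: continuous_intros)

lemma per_bounded:
  fixes g :: "real^'d \<Rightarrow> real"
  assumes "periodic g" "continuous_on UNIV g"
  shows "\<exists>B. \<forall>x. \<bar>g x\<bar> \<le> B"
proof -
  obtain a b where "\<forall>x. g x \<le> g a" "\<forall>x. g b \<le> g x" using per_max[OF assms] per_min[OF assms] by blast
  then have "\<forall>x. \<bar>g x\<bar> \<le> max (g a) (- g b)" by (metis abs_le_iff le_max_iff_disj neg_le_iff_le)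
  then show ?thesis by blast
qed

lemma supnorm_ge:
  assumes "\<forall>x. \<bar>g x\<bar> \<le> B"
  shows "\<bar>g x\<bar> \<le> supnorm g"
  unfolding supnorm_def using assms by (intro cSUP_upper) (auto intro: bdd_aboveI2)

lemma supnorm_le:
  assumes "\<forall>x. \<bar>g x\<bar> \<le> C"
  shows "supnorm g \<le> C"
  unfolding supnorm_def using assms by (intro cSUP_least) auto

lemma supnorm_vec_le:
  assumes "\<forall>x. norm (g x) \<le> C"
  shows "supnorm_vec g \<le> C"
  unfolding supnorm_vec_def using assms by (intro cSUP_least) auto



lemma C2_cont:
  fixes u :: "real^'d \<Rightarrow> real"
  assumes "C2 u"
  shows "continuous_on UNIV u" "continuous_on UNIV (pd i u)"
    "continuous_on UNIV (pd j (pd i u))" "continuous_on UNIV (laplacian u)"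
proof -
  show "continuous_on UNIV u" using assms unfolding C2_def
    by (meson continuous_at_imp_continuous_on differentiable_imp_continuous_within)
  show "continuous_on UNIV (pd i u)" using assms unfolding C2_def
    by (meson continuous_at_imp_continuous_on differentiable_imp_continuous_within)
  show c: "continuous_on UNIV (pd j (pd i u))" using assms unfolding C2_def by blast
  have "continuous_on UNIV (\<lambda>x. \<Sum>i\<in>UNIV. pd i (pd i u) x)"
    using assms unfolding C2_def by (intro continuous_on_sum) auto
  then show "continuous_on UNIV (laplacian u)" unfolding laplacian_def by simp
qed

lemma line_second_axis:
  fixes u :: "real^'d \<Rightarrow> real"
  assumes "C2 u"
  shows "((\<lambda>s. pd k u (x + s *\<^sub>R axis k 1)) has_real_derivative pd k (pd k u) x) (at 0)"
  using line_second[OF assms, of "axis k 1" x] by (simp add: axis_sum Hq_axis)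

lemma max_pd:
  fixes u :: "real^'d \<Rightarrow> real"
  assumes "C2 u" "\<forall>y. u y \<le> u x0"
  shows "pd k u x0 = 0 \<and> pd k (pd k u) x0 \<le> 0"
proof -
  have du: "\<forall>y. u differentiable (at y)" using assms(1) unfolding C2_def by blast
  have "(\<lambda>s. pd k u (x0 + s *\<^sub>R axis k 1)) 0 = 0 \<and> pd k (pd k u) x0 \<le> 0"
    by (rule second_test[where h="\<lambda>s. u (x0 + s *\<^sub>R axis k 1)" and \<delta>=1])
       (use pd_deriv[OF du] line_second_axis[OF assms(1)] assms(2) in auto)
  then show ?thesis by simp
qed

lemma min_pd:
  fixes u :: "real^'d \<Rightarrow> real"
  assumes "C2 u" "\<forall>y. u x0 \<le> u y"
  shows "pd k u x0 = 0 \<and> pd k (pd k u) x0 \<ge> 0"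
proof -
  have du: "\<forall>y. u differentiable (at y)" using assms(1) unfolding C2_def by blast
  have "(\<lambda>s. - pd k u (x0 + s *\<^sub>R axis k 1)) 0 = 0 \<and> - pd k (pd k u) x0 \<le> 0"
    by (rule second_test[where h="\<lambda>s. - u (x0 + s *\<^sub>R axis k 1)" and \<delta>=1])
       (use pd_deriv[OF du] line_second_axis[OF assms(1)] assms(2) in \<open>auto intro!: derivative_intros\<close>)
  then show ?thesis by simp
qed

lemma grad_zero: "(\<And>k. pd k u x = 0) \<Longrightarrow> grad u x = 0"
  by (simp add: grad_def vec_eq_iff)

lemma u_bound:
  fixes u :: "real^'d \<Rightarrow> real"
  assumes C: "C2 u" and P: "periodic u"
    and eq: "\<forall>x. - laplacian u x + (1/2) * (norm (grad u x))\<^sup>2 + lam * u x = F x"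
    and FS: "\<forall>x. \<bar>F x\<bar> \<le> S" and lam: "lam > 0"
  shows "\<bar>u x\<bar> \<le> S / lam"
proof -
  obtain a where a: "\<forall>y. u y \<le> u a" using per_max[OF P C2_cont(1)[OF C]] by blast
  obtain b where b: "\<forall>y. u b \<le> u y" using per_min[OF P C2_cont(1)[OF C]] by blast
  have ga: "grad u a = 0" using max_pd[OF C a] grad_zero by blast
  have la: "laplacian u a \<le> 0" unfolding laplacian_def using max_pd[OF C a] by (simp add: sum_nonpos)
  have gb: "grad u b = 0" using min_pd[OF C b] grad_zero by blast
  have lb: "laplacian u b \<ge> 0" unfolding laplacian_def using min_pd[OF C b] by (simp add: sum_nonneg)
  have "lam * u a \<le> S" using eq[rule_format, of a] ga la FS[rule_format, of a] by auto
  then have "u a \<le> S / lam" using lam by (simp add: field_simps)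
  moreover have "lam * u b \<ge> - S" using eq[rule_format, of b] gb lb FS[rule_format, of b] by auto
  then have "u b \<ge> - S / lam" using lam by (simp add: field_simps)
  ultimately show ?thesis using a[rule_format, of x] b[rule_format, of x] by (simp add: abs_le_iff)
qed



lemma sum_sq_unit:
  fixes e :: "real^'d"
  assumes "norm e = 1"
  shows "(\<Sum>k\<in>UNIV. e$k * e$k) = 1"
proof -
  have "inner e e = 1" using assms by (simp add: dot_square_norm)
  then show ?thesis by (simp add: inner_vec_def)
qed

lemma quad_swap:
  fixes a :: "'k::finite \<Rightarrow> real^'d" and H :: "'d \<Rightarrow> 'd \<Rightarrow> real"
  shows "(\<Sum>k\<in>UNIV. \<Sum>i\<in>UNIV. a k $ i * (\<Sum>j\<in>UNIV. a k $ j * H i j))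
       = (\<Sum>i\<in>UNIV. \<Sum>j\<in>UNIV. (\<Sum>k\<in>UNIV. a k $ i * a k $ j) * H i j)"
proof -
  have "(\<Sum>k\<in>UNIV. \<Sum>i\<in>UNIV. a k $ i * (\<Sum>j\<in>UNIV. a k $ j * H i j))
      = (\<Sum>k\<in>UNIV. \<Sum>i\<in>UNIV. \<Sum>j\<in>UNIV. a k $ i * a k $ j * H i j)"
    by (simp add: sum_distrib_left mult.assoc)
  also have "\<dots> = (\<Sum>i\<in>UNIV. \<Sum>k\<in>UNIV. \<Sum>j\<in>UNIV. a k $ i * a k $ j * H i j)"
    by (rule sum.swap)
  also have "\<dots> = (\<Sum>i\<in>UNIV. \<Sum>j\<in>UNIV. \<Sum>k\<in>UNIV. a k $ i * a k $ j * H i j)"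
    by (rule sum.cong[OF refl], rule sum.swap)
  also have "\<dots> = (\<Sum>i\<in>UNIV. \<Sum>j\<in>UNIV. (\<Sum>k\<in>UNIV. a k $ i * a k $ j) * H i j)"
    by (simp add: sum_distrib_right)
  finally show ?thesis .
qed

lemma refl_orth:
  fixes e :: "real^'d"
  assumes "norm e = 1"
  shows "(\<Sum>k\<in>UNIV. (axis k 1 - (2 * e$k) *\<^sub>R e) $ i * (axis k 1 - (2 * e$k) *\<^sub>R e) $ j)
       = (if i = j then 1 else 0)"
proof -
  have ax: "axis k (1::real) $ i = (if k = i then 1 else 0)" for k i by (simp add: axis_def)
  have "(\<Sum>k\<in>UNIV. (axis k 1 - (2 * e$k) *\<^sub>R e) $ i * (axis k 1 - (2 * e$k) *\<^sub>R e) $ j)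
     = (\<Sum>k\<in>UNIV. (if k = i then 1 else 0) * (if k = j then 1 else 0))
       - 2 * e$j * (\<Sum>k\<in>UNIV. (if k = i then 1 else 0) * e$k) 
       - 2 * e$i * (\<Sum>k\<in>UNIV. (if k = j then 1 else 0) * e$k)
       + 4 * e$i * e$j * (\<Sum>k\<in>UNIV. e$k * e$k)"
    by (simp add: ax algebra_simps sum.distrib sum_subtractf sum_distrib_left)
  also have "\<dots> = (if i = j then 1 else 0)"
    using sum_sq_unit[OF assms] by (simp add: if_distrib[of "\<lambda>x. x * _"] cong: if_cong)
  finally show ?thesis .
qed

lemma trace_reflect:
  fixes e :: "real^'d"
  assumes "norm e = 1"
  shows "(\<Sum>k\<in>UNIV. Hq u y (axis k 1 - (2 * e$k) *\<^sub>R e)) = laplacian u y"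
proof -
  have "(\<Sum>k\<in>UNIV. Hq u y (axis k 1 - (2 * e$k) *\<^sub>R e))
      = (\<Sum>i\<in>UNIV. \<Sum>j\<in>UNIV. (if i = j then 1 else 0) * pd j (pd i u) y)"
    unfolding Hq_def quad_swap refl_orth[OF assms] ..
  also have "\<dots> = laplacian u y"
    by (simp add: laplacian_def if_distrib[of "\<lambda>x. x * _"] cong: if_cong)
  finally show ?thesis .
qed



definition phi :: "real \<Rightarrow> real \<Rightarrow> real" where
  "phi R t = t - t^2 / (4 * R)"

lemma phi_diff: "R > 0 \<Longrightarrow> phi R b - phi R a = (b - a) * (1 - (a + b) / (4 * R))"
  by (simp add: phi_def field_simps power2_eq_square)

lemma phi_mono: "R > 0 \<Longrightarrow> 0 \<le> a \<Longrightarrow> a \<le> b \<Longrightarrow> b \<le> 2 * R \<Longrightarrow> phi R a \<le> phi R b"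
proof -
  assume R: "R > 0" and ab: "0 \<le> a" "a \<le> b" "b \<le> 2 * R"
  have "(a + b) / (4 * R) \<le> 1" using R ab by (simp add: field_simps)
  then have "0 \<le> (b - a) * (1 - (a + b) / (4 * R))" using ab by simp
  then show ?thesis using phi_diff[OF R, of b a] by simp
qed

lemma phi_nonneg: "R > 0 \<Longrightarrow> 0 \<le> t \<Longrightarrow> t \<le> 2 * R \<Longrightarrow> 0 \<le> phi R t"
  using phi_mono[of R 0 t] by (simp add: phi_def)

lemma phi_le: "R > 0 \<Longrightarrow> phi R t \<le> t"
  by (simp add: phi_def)

lemma shift_small:
  fixes w :: "real^'d"
  defines "w1 \<equiv> w - (\<chi> i. of_int (floor (w$i + 1/2)))"
  shows "norm w1 \<le> sqrt (real CARD('d)) / 2"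
proof -
  have c: "\<bar>w1$i\<bar> \<le> 1/2" for i
  proof -
    have "of_int (floor (w$i + 1/2)) \<le> w$i + 1/2" by (rule of_int_floor_le)
    moreover have "w$i + 1/2 < of_int (floor (w$i + 1/2)) + 1" by (rule real_of_int_floor_add_one_gt)
    ultimately show ?thesis unfolding w1_def by (simp only: vector_minus_component vec_lambda_beta abs_le_iff) linarith
  qed
  have "(norm w1)^2 = (\<Sum>i\<in>UNIV. w1$i * w1$i)"
    by (simp add: power2_norm_eq_inner inner_vec_def)
  also have "\<dots> \<le> (\<Sum>i\<in>(UNIV::'d set). 1/4)"
  proof (rule sum_mono)
    fix i
    have "w1$i * w1$i = \<bar>w1$i\<bar> * \<bar>w1$i\<bar>" by simp
    also have "\<dots> \<le> (1/2) * (1/2)" using c[of i] by (intro mult_mono) auto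
    finally show "w1$i * w1$i \<le> 1/4" by simp
  qed
  also have "\<dots> = (sqrt (real CARD('d)) / 2)^2" by (simp add: power_divide)
  finally show ?thesis by (rule power2_le_imp_le) simp
qed

lemma shift_int: "\<forall>i. (\<chi> i. of_int (floor ((w::real^'d)$i + 1/2)) :: real^'d) $ i \<in> \<int>"
  by simp

lemma max_exists:
  fixes u :: "real^'d \<Rightarrow> real"
  assumes P: "periodic u" and cu: "continuous_on UNIV u"
    and R: "R = sqrt (real CARD('d))" and L: "L \<ge> 0"
  shows "\<exists>x0 w0. norm w0 \<le> R / 2 \<and>
    (\<forall>x w. norm w \<le> R \<longrightarrow> u x - u (x - w) - L * phi R (norm w) \<le> u x0 - u (x0 - w0) - L * phi R (norm w0))"
proof -
  have Rpos: "R \<ge> 1" using R by simp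
  define Ph where "Ph = (\<lambda>p::(real^'d) \<times> (real^'d). u (fst p) - u (fst p - snd p) - L * phi R (norm (snd p)))"
  define C where "C = cbox (0::real^'d) (\<chi> i. 1) \<times> cball (0::real^'d) R"
  have cC: "compact C" unfolding C_def by (intro compact_Times) auto
  have neC: "C \<noteq> {}" unfolding C_def using frac_vec_box Rpos by auto
  have c1: "continuous_on C (\<lambda>p. u (fst p))"
    by (rule continuous_on_compose2[OF cu]) (auto intro: continuous_intros)
  have c2: "continuous_on C (\<lambda>p. u (fst p - snd p))"
    by (rule continuous_on_compose2[OF cu]) (auto intro!: continuous_on_diff continuous_on_fst continuous_on_snd continuous_on_id)
  have c3: "continuous_on C (\<lambda>p. L * phi R (norm (snd p)))"
    unfolding phi_def using Rpos by (auto intro!: continuous_intros)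
  have "continuous_on C Ph" unfolding Ph_def using c1 c2 c3 by (intro continuous_on_diff)
  then obtain p0 where p0: "p0 \<in> C" "\<forall>p\<in>C. Ph p \<le> Ph p0"
    using continuous_attains_sup[OF cC neC] by blast
  obtain x0 w0 where xw0: "p0 = (x0, w0)" by (cases p0)
  have w0R: "norm w0 \<le> R" using p0(1) xw0 unfolding C_def by auto
  have glob: "Ph (x, w) \<le> Ph (x0, w0)" if "norm w \<le> R" for x w
  proof -
    have "u (frac_vec x) = u x" by (rule frac_vec_per[OF P])
    moreover have "u (frac_vec x - w) = u (x - w)"
    proof -
      have "u ((x - w) + (frac_vec x - x)) = u (x - w)"
        by (rule per_vec[OF P]) (simp add: frac_vec_def)
      then show ?thesis by (simp add: algebra_simps)
    qed
    ultimately have "Ph (x, w) = Ph (frac_vec x, w)" unfolding Ph_def by simp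
    also have "\<dots> \<le> Ph (x0, w0)"
    proof -
      have "(frac_vec x, w) \<in> C" using frac_vec_box that unfolding C_def by (auto simp: dist_norm)
      then show ?thesis using p0(2) xw0 by auto
    qed
    finally show ?thesis .
  qed
  show ?thesis
  proof (cases "norm w0 \<le> R / 2")
    case True
    then show ?thesis using glob unfolding Ph_def by auto
  next
    case False
    define w1 where "w1 = w0 - (\<chi> i. of_int (floor (w0$i + 1/2)))"
    have w1: "norm w1 \<le> R / 2" unfolding w1_def R by (rule shift_small)
    have "u (x0 - w1) = u ((x0 - w0) + (\<chi> i. of_int (floor (w0$i + 1/2))))"
      unfolding w1_def by (simp add: algebra_simps)
    also have "\<dots> = u (x0 - w0)" by (rule per_vec[OF P]) simp
    finally have uw: "u (x0 - w1) = u (x0 - w0)" .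
    have "phi R (norm w1) \<le> phi R (norm w0)"
      using phi_mono[of R "norm w1" "norm w0"] Rpos w1 False w0R by auto
    then have "Ph (x0, w0) \<le> Ph (x0, w1)" unfolding Ph_def using uw
      using mult_left_mono[OF _ L] by simp
    moreover have "norm w1 \<le> R" using w1 Rpos by simp
    ultimately have "\<forall>x w. norm w \<le> R \<longrightarrow> u x - u (x - w) - L * phi R (norm w) \<le> u x0 - u (x0 - w1) - L * phi R (norm w1)"
      using glob unfolding Ph_def by (simp, smt (verit))
    then show ?thesis using w1 by blast
  qed
qed



lemma phi_line_deriv:
  "R > 0 \<Longrightarrow> ((\<lambda>s. phi R (r + 2 * s * c)) has_real_derivative (2*c - c*(r + 2 * s * c)/R)) (at s)"
  unfolding phi_def
  by (rule derivative_eq_intros refl | simp)+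

lemma phi_line_deriv2:
  "R > 0 \<Longrightarrow> ((\<lambda>s. 2*c - c*(r + 2 * s * c)/R) has_real_derivative (-2*c*c/R)) (at s)"
  by (rule derivative_eq_intros refl | simp)+

lemma lip_bound:
  fixes u :: "real^'d \<Rightarrow> real"
  assumes C: "C2 u" and P: "periodic u"
    and eq: "\<forall>x. - laplacian u x + (1/2) * (norm (grad u x))\<^sup>2 + lam * u x = F x"
    and FS: "\<forall>x. \<bar>F x\<bar> \<le> S" and lam: "lam > 0"
    and R: "R = sqrt (real CARD('d))" and L: "L = S * R + 1"
  shows "\<forall>x w. norm w \<le> R \<longrightarrow> u x - u (x - w) \<le> L * phi R (norm w)"
proof -
  have S0: "S \<ge> 0" using FS by (meson abs_ge_zero order.trans)
  have R1: "R \<ge> 1" using R by simp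
  have L0: "L \<ge> 0" using S0 R1 L by simp
  have du: "\<forall>y. u differentiable (at y)" using C unfolding C2_def by blast
  obtain x0 w0 where w0: "norm w0 \<le> R / 2"
    and mx: "\<forall>x w. norm w \<le> R \<longrightarrow> u x - u (x - w) - L * phi R (norm w) \<le> u x0 - u (x0 - w0) - L * phi R (norm w0)"
    using max_exists[OF P C2_cont(1)[OF C] R L0] by blast
  have "u x0 - u (x0 - w0) - L * phi R (norm w0) \<le> 0"
  proof (rule ccontr)
    assume "\<not> ?thesis"
    then have pos: "u x0 - u (x0 - w0) - L * phi R (norm w0) > 0" by simp
    define r where "r = norm w0"
    have r0: "r > 0" using pos unfolding r_def by (cases "w0 = 0") (auto simp: phi_def)
    define e where "e = (1/r) *\<^sub>R w0"
    have ne: "norm e = 1" using r0 unfolding e_def r_def by simp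
    have w0e: "w0 = r *\<^sub>R e" using r0 unfolding e_def by simp
    define y where "y = x0 - w0"
    have ek: "\<bar>e$k\<bar> \<le> 1" for k using component_le_norm_cart[of e k] ne by simp
    have grad_eq: "grad u x0 = grad u y"
    proof -
      have "pd i u x0 - pd i u y = 0" for i
      proof (rule DERIV_local_max[where f="\<lambda>s. u (x0 + s *\<^sub>R axis i 1) - u (y + s *\<^sub>R axis i 1) - L * phi R r" and x=0 and d=1])
        show "((\<lambda>s. u (x0 + s *\<^sub>R axis i 1) - u (y + s *\<^sub>R axis i 1) - L * phi R r) has_real_derivative pd i u x0 - pd i u y) (at 0)"
          using DERIV_diff[OF DERIV_diff[OF pd_deriv[OF du, of x0 i 0] pd_deriv[OF du, of y i 0]] DERIV_const]
          by simp
        show "\<forall>s. \<bar>0 - s\<bar> < 1 \<longrightarrow> u (x0 + s *\<^sub>R axis i 1) - u (y + s *\<^sub>R axis i 1) - L * phi R r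
           \<le> u (x0 + 0 *\<^sub>R axis i 1) - u (y + 0 *\<^sub>R axis i 1) - L * phi R r"
        proof (intro allI impI)
          fix s :: real
          have e1: "(x0 + s *\<^sub>R axis i 1) - w0 = y + s *\<^sub>R axis i 1" by (simp add: y_def algebra_simps)
          have "u (x0 + s *\<^sub>R axis i 1) - u ((x0 + s *\<^sub>R axis i 1) - w0) - L * phi R (norm w0)
             \<le> u x0 - u (x0 - w0) - L * phi R (norm w0)" using mx w0 R1 by auto
          then show "u (x0 + s *\<^sub>R axis i 1) - u (y + s *\<^sub>R axis i 1) - L * phi R r
           \<le> u (x0 + 0 *\<^sub>R axis i 1) - u (y + 0 *\<^sub>R axis i 1) - L * phi R r"
            unfolding e1 r_def y_def by simp
        qed
      qed simp
      then show ?thesis by (simp add: grad_def vec_eq_iff)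
    qed
    have sec: "pd k (pd k u) x0 - Hq u y (axis k 1 - (2 * e$k) *\<^sub>R e) + L * (2 * e$k * e$k / R) \<le> 0" for k
    proof -
      define \<eta> where "\<eta> = axis k 1 - (2 * e$k) *\<^sub>R e"
      define \<delta> where "\<delta> = min (r/2) (R/4)"
      define h where "h = (\<lambda>s. u (x0 + s *\<^sub>R axis k 1) - u (y + s *\<^sub>R \<eta>) - L * phi R (r + 2 * s * e$k))"
      define h' where "h' = (\<lambda>s. pd k u (x0 + s *\<^sub>R axis k 1) - (\<Sum>i\<in>UNIV. \<eta>$i * pd i u (y + s *\<^sub>R \<eta>))
          - L * (2*e$k - e$k*(r + 2 * s * e$k)/R))"
      have "h' 0 = 0 \<and> pd k (pd k u) x0 - Hq u y \<eta> - L * (-2*e$k*e$k/R) \<le> 0"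
      proof (rule second_test[where h=h and h'=h' and \<delta>=\<delta>])
        fix s
        show "(h has_real_derivative h' s) (at s)"
          unfolding h_def h'_def
          using DERIV_diff[OF DERIV_diff[OF pd_deriv[OF du, of x0 k s] dir_deriv[OF du, of y \<eta> s]] DERIV_cmult[OF phi_line_deriv[of R r "e$k" s], of L]] R1
          by simp
      next
        show "(h' has_real_derivative pd k (pd k u) x0 - Hq u y \<eta> - L * (-2*e$k*e$k/R)) (at 0)"
          unfolding h'_def
          using DERIV_diff[OF DERIV_diff[OF line_second_axis[OF C, of k x0] line_second[OF C, of \<eta> y]] DERIV_cmult[OF phi_line_deriv2[of R "e$k" r 0], of L]] R1
          by simp
      next
        show "\<delta> > 0" using r0 R1 by (simp add: \<delta>_def)
      next
        fix s :: real
        assume s: "\<bar>s\<bar> < \<delta>"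
        define w where "w = w0 + (2 * s * e$k) *\<^sub>R e"
        have "\<bar>2 * s * e$k\<bar> \<le> 2 * \<bar>s\<bar>" using ek[of k] by (simp add: abs_mult mult_left_le)
        then have c1: "\<bar>2 * s * e$k\<bar> < r" "\<bar>2 * s * e$k\<bar> \<le> R/2" using s by (auto simp: \<delta>_def)
        have "w = (r + 2 * s * e$k) *\<^sub>R e" unfolding w_def w0e by (simp add: algebra_simps)
        then have nw: "norm w = r + 2 * s * e$k" using ne c1 by simp
        have nwR: "norm w \<le> R" using nw c1 w0 unfolding r_def by simp
        have yw: "y + s *\<^sub>R \<eta> = (x0 + s *\<^sub>R axis k 1) - w"
          unfolding y_def \<eta>_def w_def by (simp add: algebra_simps)
        have "h s = u (x0 + s *\<^sub>R axis k 1) - u ((x0 + s *\<^sub>R axis k 1) - w) - L * phi R (norm w)"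
          unfolding h_def using yw nw by simp
        also have "\<dots> \<le> u x0 - u (x0 - w0) - L * phi R (norm w0)" using mx nwR by blast
        also have "\<dots> = h 0" unfolding h_def y_def r_def by simp
        finally show "h s \<le> h 0" .
      qed
      then show ?thesis unfolding \<eta>_def by simp
    qed
    have "(\<Sum>k\<in>UNIV. pd k (pd k u) x0 - Hq u y (axis k 1 - (2 * e$k) *\<^sub>R e) + L * (2 * e$k * e$k / R)) \<le> 0"
      using sec by (intro sum_nonpos) auto
    moreover have "(\<Sum>k\<in>UNIV. pd k (pd k u) x0 - Hq u y (axis k 1 - (2 * e$k) *\<^sub>R e) + L * (2 * e$k * e$k / R))
       = laplacian u x0 - laplacian u y + 2 * L / R"
    proof -
      have "(\<Sum>k\<in>UNIV. L * (2 * e$k * e$k / R)) = 2 * L / R * (\<Sum>k\<in>UNIV. e$k * e$k)"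
        by (simp add: sum_distrib_left mult_ac)
      then show ?thesis
        using trace_reflect[OF ne, of u y] sum_sq_unit[OF ne]
        by (simp add: sum.distrib sum_subtractf laplacian_def)
    qed
    ultimately have A: "laplacian u x0 - laplacian u y \<le> - 2 * L / R" by simp
    have ph: "phi R r \<ge> 0" using phi_nonneg[of R r] r0 w0 R1 unfolding r_def by simp
    have "u x0 - u y > 0" using pos ph L0 unfolding y_def r_def
      by (smt (verit) mult_nonneg_nonneg)
    then have "lam * (u x0 - u y) > 0" using lam by simp
    moreover have "laplacian u x0 - laplacian u y = lam * (u x0 - u y) - F x0 + F y"
      using eq[rule_format, of x0] eq[rule_format, of y] grad_eq by (simp add: algebra_simps)
    ultimately have "laplacian u x0 - laplacian u y > - 2 * S"
      using FS[rule_format, of x0] FS[rule_format, of y] by (simp add: abs_le_iff)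
    with A have "2 * L / R < 2 * S" by simp
    then have "L < S * R" using R1 by (simp add: field_simps)
    then show False using L by simp
  qed
  then show ?thesis using mx by (smt (verit))
qed



lemma grad_bound:
  fixes u :: "real^'d \<Rightarrow> real"
  assumes C: "C2 u" and P: "periodic u"
    and eq: "\<forall>x. - laplacian u x + (1/2) * (norm (grad u x))\<^sup>2 + lam * u x = F x"
    and FS: "\<forall>x. \<bar>F x\<bar> \<le> S" and lam: "lam > 0"
    and R: "R = sqrt (real CARD('d))" and L: "L = S * R + 1"
  shows "norm (grad u x) \<le> L"
proof (rule ccontr)
  assume nle: "\<not> norm (grad u x) \<le> L"
  have lip: "\<forall>x w. norm w \<le> R \<longrightarrow> u x - u (x - w) \<le> L * phi R (norm w)"
    by (rule lip_bound[OF C P eq FS lam R L])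
  have S0: "S \<ge> 0" using FS by (meson abs_ge_zero order.trans)
  have R1: "R \<ge> 1" using R by simp
  have L0: "L \<ge> 0" using S0 R1 L by simp
  have du: "\<forall>y. u differentiable (at y)" using C unfolding C2_def by blast
  define g where "g = grad u x"
  define n where "n = norm g"
  have n0: "n > 0" using nle L0 unfolding n_def g_def by linarith
  define v where "v = (1/n) *\<^sub>R g"
  have nv: "norm v = 1" using n0 unfolding v_def n_def by simp
  have "(\<Sum>i\<in>UNIV. v$i * pd i u (x + 0 *\<^sub>R v)) = (1/n) * (\<Sum>i\<in>UNIV. g$i * g$i)"
    by (simp add: v_def g_def grad_def sum_distrib_left mult.assoc)
  also have "(\<Sum>i\<in>UNIV. g$i * g$i) = n * n"
  proof -
    have "inner g g = (\<Sum>i\<in>UNIV. g$i * g$i)" by (simp add: inner_vec_def)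
    moreover have "inner g g = n * n" unfolding n_def by (simp add: dot_square_norm power2_eq_square)
    ultimately show ?thesis by simp
  qed
  finally have dv: "(\<Sum>i\<in>UNIV. v$i * pd i u (x + 0 *\<^sub>R v)) = n" using n0 by simp
  have D: "((\<lambda>t. u (x + t *\<^sub>R v) - L * t) has_real_derivative n - L) (at 0)"
    using DERIV_diff[OF dir_deriv[OF du, of x v 0] DERIV_cmult[OF DERIV_ident, of L]] dv by simp
  obtain d where d: "d > 0" "\<And>h. h > 0 \<Longrightarrow> h < d \<Longrightarrow> u (x + 0 *\<^sub>R v) - L * 0 < u (x + (0 + h) *\<^sub>R v) - L * (0 + h)"
    using DERIV_pos_inc_right[OF D] nle unfolding n_def g_def by force
  define h where "h = min (d/2) R"
  have h: "h > 0" "h < d" "h \<le> R" using d R1 by (auto simp: h_def)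
  have "u (x + h *\<^sub>R v) - u ((x + h *\<^sub>R v) - h *\<^sub>R v) \<le> L * phi R (norm (h *\<^sub>R v))"
    using lip[rule_format, of "h *\<^sub>R v" "x + h *\<^sub>R v"] h nv by simp
  also have "\<dots> \<le> L * h" using phi_le[of R "norm (h *\<^sub>R v)"] R1 nv h L0 by (simp add: mult_left_mono)
  finally have "u (x + h *\<^sub>R v) - u x \<le> L * h" by simp
  moreover have "u x < u (x + h *\<^sub>R v) - L * h" using d(2)[OF h(1) h(2)] by simp
  ultimately show False by simp
qed

lemma pd_prod:
  fixes m u :: "real^'d \<Rightarrow> real"
  assumes "C2 m" "C2 u"
  shows "pd i (\<lambda>y. m y * pd i u y) x = pd i m x * pd i u x + m x * pd i (pd i u) x"
proof -
  have dm: "\<forall>y. m differentiable (at y)" using assms(1) unfolding C2_def by blast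
  have du: "\<forall>y. pd i u differentiable (at y)" using assms(2) unfolding C2_def by blast
  have "((\<lambda>t. m (x + t *\<^sub>R axis i 1) * pd i u (x + t *\<^sub>R axis i 1)) has_real_derivative
      pd i m x * pd i u x + m x * pd i (pd i u) x) (at 0)"
    using DERIV_mult[OF pd_deriv[OF dm, of x i 0] pd_deriv[OF du, of x i 0]] by (simp add: mult.commute)
  then show ?thesis unfolding pd_def[of i "\<lambda>y. m y * pd i u y"] by (rule DERIV_imp_deriv)
qed

lemma div_formula:
  fixes m u :: "real^'d \<Rightarrow> real"
  assumes "C2 m" "C2 u"
  shows "div_mgrad m u x = (\<Sum>i\<in>UNIV. pd i m x * pd i u x) + m x * laplacian u x"
  unfolding div_mgrad_def laplacian_def pd_prod[OF assms]
  by (simp add: sum.distrib sum_distrib_left)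

lemma div_cont:
  fixes m u :: "real^'d \<Rightarrow> real"
  assumes "C2 m" "C2 u"
  shows "continuous_on UNIV (div_mgrad m u)"
proof -
  have "continuous_on UNIV (\<lambda>x. (\<Sum>i\<in>UNIV. pd i m x * pd i u x) + m x * laplacian u x)"
    using C2_cont[OF assms(1)] C2_cont[OF assms(2)] by (intro continuous_intros) auto
  moreover have "div_mgrad m u = (\<lambda>x. (\<Sum>i\<in>UNIV. pd i m x * pd i u x) + m x * laplacian u x)"
    using div_formula[OF assms] by (intro ext) simp
  ultimately show ?thesis by simp
qed

lemma m_bound:
  fixes m u m0 :: "real^'d \<Rightarrow> real"
  assumes Cm: "C2 m" and Cu: "C2 u" and Pm: "periodic m"
    and eq: "\<forall>x. - laplacian m x - div_mgrad m u x + lam * m x = lam * m0 x"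
    and LM: "\<forall>x. \<bar>laplacian u x\<bar> \<le> M" and lM: "lam > M"
    and N: "\<forall>x. \<bar>m0 x\<bar> \<le> N"
  shows "\<bar>m x\<bar> \<le> lam / (lam - M) * N"
proof -
  have N0: "N \<ge> 0" using N by (meson abs_ge_zero order.trans)
  have M0: "M \<ge> 0" using LM by (meson abs_ge_zero order.trans)
  have lp: "lam - M > 0" using lM by simp
  have B0: "lam / (lam - M) * N \<ge> 0" using lp M0 lM N0 by simp
  obtain a where a: "\<forall>y. m y \<le> m a" using per_max[OF Pm C2_cont(1)[OF Cm]] by blast
  obtain b where b: "\<forall>y. m b \<le> m y" using per_min[OF Pm C2_cont(1)[OF Cm]] by blast
  have da: "div_mgrad m u a = m a * laplacian u a"
    using div_formula[OF Cm Cu, of a] max_pd[OF Cm a] by simp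
  have la: "laplacian m a \<le> 0" unfolding laplacian_def using max_pd[OF Cm a] by (simp add: sum_nonpos)
  have db: "div_mgrad m u b = m b * laplacian u b"
    using div_formula[OF Cm Cu, of b] min_pd[OF Cm b] by simp
  have lb: "laplacian m b \<ge> 0" unfolding laplacian_def using min_pd[OF Cm b] by (simp add: sum_nonneg)
  have up: "m a \<le> lam / (lam - M) * N"
  proof (cases "m a \<ge> 0")
    case True
    have "m a * laplacian u a \<le> m a * M" using True LM[rule_format, of a] by (intro mult_left_mono) auto
    moreover have "lam * m a = lam * m0 a + laplacian m a + m a * laplacian u a"
      using eq[rule_format, of a] da by simp
    moreover have "lam * m0 a \<le> lam * N" using N[rule_format, of a] lM M0 by (intro mult_left_mono) auto
    ultimately have "m a * (lam - M) \<le> lam * N" using la by (simp add: algebra_simps)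
    then have "m a \<le> (lam * N) / (lam - M)" using pos_le_divide_eq[OF lp] by blast
    then show ?thesis by simp
  next
    case False then show ?thesis using B0 by simp
  qed
  have lo: "m b \<ge> - (lam / (lam - M) * N)"
  proof (cases "m b \<le> 0")
    case True
    have "m b * laplacian u b \<ge> m b * M" using True LM[rule_format, of b] by (intro mult_left_mono_neg) auto
    moreover have "lam * m b = lam * m0 b + laplacian m b + m b * laplacian u b"
      using eq[rule_format, of b] db by simp
    moreover have "lam * (- N) \<le> lam * m0 b" using N[rule_format, of b] lM M0
      by (intro mult_left_mono) (auto simp: abs_le_iff)
    ultimately have "- (lam * N) \<le> m b * (lam - M)" using lb by (simp add: algebra_simps)
    then have "- (lam * N) / (lam - M) \<le> m b" using pos_divide_le_eq[OF lp] by blast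
    then show ?thesis by simp
  next
    case False then show ?thesis using B0 by simp
  qed
  show ?thesis using up lo a[rule_format, of x] b[rule_format, of x] by (simp add: abs_le_iff)
qed



theorem proposition2p4:
  shows "\<exists>K :: real \<Rightarrow> real. (\<forall>s. K s > 0) \<and>
    (\<forall>(f :: real \<Rightarrow> real) (lam::real) (\<alpha>::real) (m0 :: real^'d \<Rightarrow> real) u m.
       continuous_on UNIV f \<and> bounded (range f) \<and>
       lam > 0 \<and> 0 < \<alpha> \<and> \<alpha> < 1 \<and> periodic m0 \<and> holder \<alpha> m0 \<and> prob_density m0 \<and>
       MFG_classical_solution lam f m0 u m \<longrightarrow>
       (let M = 2 * supnorm f + (K (supnorm f))\<^sup>2 / 2 in
         supnorm u \<le> supnorm f / lam \<and>
         supnorm_vec (grad u) \<le> K (supnorm f) \<and>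
         supnorm (laplacian u) \<le> M \<and>
         (lam > M \<longrightarrow> supnorm m \<le> lam / (lam - M) * supnorm m0)))"
proof (rule exI[of _ "\<lambda>s. \<bar>s\<bar> * sqrt (real CARD('d)) + 1"], intro conjI allI impI)
  fix s :: real
  show "0 < \<bar>s\<bar> * sqrt (real CARD('d)) + 1" by (simp add: add_nonneg_pos)
next
  fix f :: "real \<Rightarrow> real" and lam \<alpha> :: real and m0 u m :: "real^'d \<Rightarrow> real"
  assume H: "continuous_on UNIV f \<and> bounded (range f) \<and>
       lam > 0 \<and> 0 < \<alpha> \<and> \<alpha> < 1 \<and> periodic m0 \<and> holder \<alpha> m0 \<and> prob_density m0 \<and>
       MFG_classical_solution lam f m0 u m"
  define S where "S = supnorm f"
  define R where "R = sqrt (real CARD('d))"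
  define L where "L = S * R + 1"
  define M where "M = 2 * S + L\<^sup>2 / 2"
  have lam: "lam > 0" using H by blast
  have P0: "periodic m0" using H by blast
  have "bounded (range f)" using H by blast
  then obtain B where B: "\<forall>x\<in>range f. norm x \<le> B" unfolding bounded_iff by blast
  have B': "\<forall>t. \<bar>f t\<bar> \<le> B"
  proof
    fix t show "\<bar>f t\<bar> \<le> B" using B[rule_format, OF rangeI[of f t]] by simp
  qed
  have fS: "\<forall>t. \<bar>f t\<bar> \<le> S"
  proof
    fix t show "\<bar>f t\<bar> \<le> S" unfolding S_def by (rule supnorm_ge[OF B'])
  qed
  then have S0: "S \<ge> 0" by (meson abs_ge_zero order.trans)
  have KS: "\<bar>S\<bar> * sqrt (real CARD('d)) + 1 = L" using S0 by (simp add: L_def R_def)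
  have sol: "periodic u" "periodic m" "C2 u" "C2 m"
    "\<forall>x. - laplacian u x + (1/2) * (norm (grad u x))\<^sup>2 + lam * u x = f (m x)"
    "\<forall>x. - laplacian m x - div_mgrad m u x + lam * m x = lam * m0 x"
    using H unfolding MFG_classical_solution_def by blast+
  have FS: "\<forall>x. \<bar>f (m x)\<bar> \<le> S" using fS by blast
  have ub: "\<bar>u x\<bar> \<le> S / lam" for x by (rule u_bound[OF sol(3) sol(1) sol(5) FS lam])
  have gb: "norm (grad u x) \<le> L" for x by (rule grad_bound[OF sol(3) sol(1) sol(5) FS lam R_def L_def])
  have lb: "\<bar>laplacian u x\<bar> \<le> M" for x
  proof -
    have e: "laplacian u x = (1/2) * (norm (grad u x))\<^sup>2 + lam * u x - f (m x)"
      using sol(5) by (simp add: algebra_simps)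
    have "\<bar>lam * u x\<bar> \<le> S" using ub[of x] lam by (simp add: abs_mult field_simps)
    moreover have "(norm (grad u x))\<^sup>2 \<le> L\<^sup>2" using gb[of x] by (intro power_mono) auto
    moreover have "\<bar>f (m x)\<bar> \<le> S" using FS by blast
    moreover have "0 \<le> (norm (grad u x))\<^sup>2" by simp
    ultimately show ?thesis unfolding e M_def abs_le_iff by linarith
  qed
  show "let M = 2 * supnorm f + (\<bar>supnorm f\<bar> * sqrt (real CARD('d)) + 1)\<^sup>2 / 2 in
         supnorm u \<le> supnorm f / lam \<and>
         supnorm_vec (grad u) \<le> \<bar>supnorm f\<bar> * sqrt (real CARD('d)) + 1 \<and>
         supnorm (laplacian u) \<le> M \<and>
         (lam > M \<longrightarrow> supnorm m \<le> lam / (lam - M) * supnorm m0)"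
    unfolding Let_def S_def[symmetric] KS M_def[symmetric]
  proof (intro conjI impI)
    show "supnorm u \<le> S / lam" using ub by (intro supnorm_le) blast
    show "supnorm_vec (grad u) \<le> L" using gb by (intro supnorm_vec_le) blast
    show "supnorm (laplacian u) \<le> M" using lb by (intro supnorm_le) blast
    assume lM: "M < lam"
    have m0eq: "m0 = (\<lambda>x. (- laplacian m x - div_mgrad m u x + lam * m x) / lam)"
      using sol(6) lam by (intro ext) (simp add: field_simps)
    have "continuous_on UNIV m0" unfolding m0eq
      using C2_cont[OF sol(4)] div_cont[OF sol(4) sol(3)] lam by (intro continuous_intros) auto
    then obtain B0 where B0: "\<forall>x. \<bar>m0 x\<bar> \<le> B0" using per_bounded[OF P0] by blast
    have N: "\<forall>x. \<bar>m0 x\<bar> \<le> supnorm m0"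
    proof
      fix x show "\<bar>m0 x\<bar> \<le> supnorm m0" by (rule supnorm_ge[OF B0])
    qed
    have "\<bar>m x\<bar> \<le> lam / (lam - M) * supnorm m0" for x
      by (rule m_bound[OF sol(4) sol(3) sol(2) sol(6) _ lM N]) (use lb in blast)
    then show "supnorm m \<le> lam / (lam - M) * supnorm m0" by (intro supnorm_le) blast
  qed
qed


end
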